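(* Let $d\ge 1$, $0<\alpha\le 1$ and $M>1$. For the online hitting set problem in which the point set is $\mathbb{Z}^d$ and the objects are $\alpha$-fat objects in $\mathbb{R}^d$ with widths in the range $[1,M]$, the deterministic online algorithm $\mathrm{ANC}$ described below achieves a competitive ratio of at most $\lfloor \frac{2}{\alpha}+2\rfloor^d\left(\lfloor\log_2 M\rfloor+1\right)$.
   Context: Online hitting set problem: the point set is known in advance; objects arrive one by one; upon each arrival the algorithm must ensure its current solution (points can only be added, never removed) contains a point of every object presented so far. The competitive ratio is the supremum over input sequences of the size of the algorithm's solution divided by the minimum size of an offline hitting set of the sequence. An object is a compact subset of $\mathbb{R}^d$ with non-empty interior; $\partial\sigma$ is its boundary. All distances $d_\infty$ are $L_\infty$ distances. For $x\in\sigma$ let $\alpha(x)=\min_{y\in\partial\sigma}d_\infty(x,y)/\max_{y\in\partial\sigma}d_\infty(x,y)$ and $\alpha(\sigma)=\max_{x\in\sigma}\alpha(x)$; $\sigma$ is $\alpha$-fat if $\alpha(\sigma)\ge\alpha$. A center of $\sigma$ is a point $c\in\sigma$ with $\alpha(c)=\alpha(\sigma)$ (if several, one is fixed arbitrarily); the width of $\sigma$ is $\min_{y\in\partial\sigma}d_\infty(c,y)$. Algorithm $\mathrm{ANC}$: when an object $\sigma$ with center $c$ and width $w$ arrives, if it contains a point of the current solution do nothing. Otherwise let $i=\lfloor\log_2 w\rfloor$; for each $j\in[d]$ write uniquely $c(x_j)=z_j+f_j$ with $z_j\in 2^{i+1}\mathbb{Z}$ and $f_j\in[0,2^{i+1})$,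 and define the point $r$ by $r(x_j)=z_j$ if $f_j\in[0,2^i)$ and $r(x_j)=z_j+2^{i+1}$ if $f_j\in[2^i,2^{i+1})$; add $r$ (a point of $(2^{i+1}\mathbb{Z})^d\subseteq\mathbb{Z}^d$) to the solution. *)

theory Defs
  imports "HOL-Analysis.Analysis"
begin

text \<open>Points of R^d are vectors of type real ^ 'n, with d = CARD('n).\<close>

definition dinf :: "real^'n \<Rightarrow> real^'n \<Rightarrow> real" where
  "dinf x y = Max (range (\<lambda>i. \<bar>x$i - y$i\<bar>))"

definition Zd :: "(real^'n) set" where
  "Zd = {x. \<forall>i. x$i \<in> \<int>}"

definition is_object :: "(real^'n) set \<Rightarrow> bool" where
  "is_object \<sigma> \<longleftrightarrow> compact \<sigma> \<and> interior \<sigma> \<noteq> {}"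

definition alpha_pt :: "(real^'n) set \<Rightarrow> real^'n \<Rightarrow> real" where
  "alpha_pt \<sigma> x = (INF y\<in>frontier \<sigma>. dinf x y) / (SUP y\<in>frontier \<sigma>. dinf x y)"

definition alpha_obj :: "(real^'n) set \<Rightarrow> real" where
  "alpha_obj \<sigma> = (SUP x\<in>\<sigma>. alpha_pt \<sigma> x)"

definition fat :: "real \<Rightarrow> (real^'n) set \<Rightarrow> bool" where
  "fat \<alpha> \<sigma> \<longleftrightarrow> alpha_obj \<sigma> \<ge> \<alpha>"

definition valid_center :: "((real^'n) set \<Rightarrow> real^'n) \<Rightarrow> bool" where
  "valid_center cen \<longleftrightarrow> (\<forall>\<sigma>. is_object \<sigma> \<longrightarrow>
      cen \<sigma> \<in> \<sigma> \<and> alpha_pt \<sigma> (cen \<sigma>) = alpha_obj \<sigma>)"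

definition width :: "((real^'n) set \<Rightarrow> real^'n) \<Rightarrow> (real^'n) set \<Rightarrow> real" where
  "width cen \<sigma> = (INF y\<in>frontier \<sigma>. dinf (cen \<sigma>) y)"

definition anc_point :: "((real^'n) set \<Rightarrow> real^'n) \<Rightarrow> (real^'n) set \<Rightarrow> real^'n" where
  "anc_point cen \<sigma> =
    (let i = \<lfloor>log 2 (width cen \<sigma>)\<rfloor>;
         s = (2::real) powr (real_of_int i + 1);
         h = (2::real) powr (real_of_int i)
     in (\<chi> j. let z = s * real_of_int \<lfloor>(cen \<sigma>)$j / s\<rfloor>;
                 f = (cen \<sigma>)$j - z
             in if f < h then z else z + s))"

definition anc_step :: "((real^'n) set \<Rightarrow> real^'n) \<Rightarrow> (real^'n) set \<Rightarrow> (real^'n) set \<Rightarrow> (real^'n) set" where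
  "anc_step cen S \<sigma> = (if S \<inter> \<sigma> \<noteq> {} then S else insert (anc_point cen \<sigma>) S)"

definition anc :: "((real^'n) set \<Rightarrow> real^'n) \<Rightarrow> (real^'n) set list \<Rightarrow> (real^'n) set" where
  "anc cen \<sigma>s = foldl (anc_step cen) {} \<sigma>s"

definition hits :: "(real^'n) set \<Rightarrow> (real^'n) set list \<Rightarrow> bool" where
  "hits H \<sigma>s \<longleftrightarrow> (\<forall>\<sigma>\<in>set \<sigma>s. H \<inter> \<sigma> \<noteq> {})"

definition opt :: "(real^'n) set list \<Rightarrow> nat" where
  "opt \<sigma>s = (LEAST k. \<exists>H. finite H \<and> H \<subseteq> Zd \<and> hits H \<sigma>s \<and> card H = k)"

end

theory Submission
  imports Defs
begin


lemma dinf_ge: "\<bar>x$i - y$i\<bar> \<le> dinf x y"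
  unfolding dinf_def by (rule Max_ge) auto

lemma dinf_le_iff: "dinf x y \<le> r \<longleftrightarrow> (\<forall>i. \<bar>x$i - y$i\<bar> \<le> r)"
  unfolding dinf_def by (subst Max_le_iff) auto

lemma dinf_attained: "\<exists>i. dinf x y = \<bar>x$i - y$i\<bar>"
proof -
  have "dinf x y \<in> range (\<lambda>i. \<bar>x$i - y$i\<bar>)" unfolding dinf_def by (rule Max_in) auto
  then show ?thesis by auto
qed

lemma dinf_nonneg: "0 \<le> dinf x y"
  using dinf_ge[of x _ y] abs_ge_zero order_trans by blast

lemma dinf_le_norm: "dinf x y \<le> norm (x - y)"
  unfolding dinf_le_iff using component_le_norm_cart[of "x - y"] by simp

lemma inner_box:
  fixes \<sigma> :: "(real^'n) set"
  assumes "compact \<sigma>" "c \<in> \<sigma>" "dinf c x \<le> (INF y\<in>frontier \<sigma>. dinf c y)"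
  shows "x \<in> \<sigma>"
proof (rule ccontr)
  assume nx: "x \<notin> \<sigma>"
  have "closed_segment c x \<inter> frontier \<sigma> \<noteq> {}"
    apply (rule connected_Int_frontier)
    using assms nx by auto
  then obtain y where y: "y \<in> closed_segment c x" "y \<in> frontier \<sigma>" by blast
  then obtain u where u: "0 \<le> u" "u \<le> 1" "y = (1 - u) *\<^sub>R c + u *\<^sub>R x"
    by (auto simp: in_segment)
  have bb: "bdd_below ((\<lambda>y. dinf c y) ` frontier \<sigma>)"
    by (rule bdd_belowI2[where m=0]) (rule dinf_nonneg)
  have w: "(INF y\<in>frontier \<sigma>. dinf c y) \<le> dinf c y"
    by (rule cINF_lower[OF bb y(2)])
  have "dinf c y \<le> u * dinf c x"
    unfolding dinf_le_iff
  proof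
    fix i
    have "y$i = (1 - u) * c$i + u * x$i" using u(3) by simp
    then have "c$i - y$i = u * (c$i - x$i)" by (simp add: algebra_simps)
    then have "\<bar>c$i - y$i\<bar> = u * \<bar>c$i - x$i\<bar>" using u by (simp add: abs_mult)
    then show "\<bar>c$i - y$i\<bar> \<le> u * dinf c x"
      using dinf_ge[of c i x] u by (simp add: mult_left_mono)
  qed
  show False
  proof (cases "dinf c x = 0")
    case True
    then have "x = c" using dinf_ge[of c _ x] by (auto simp: vec_eq_iff)
    then show False using nx assms by simp
  next
    case False
    then have pos: "dinf c x > 0" using dinf_nonneg[of c x] by simp
    have "u * dinf c x \<ge> dinf c x" using assms(3) w \<open>dinf c y \<le> u * dinf c x\<close> by linarith
    then have "u \<ge> 1" using pos by (simp add: mult_le_cancel_right1)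
    then have "y = x" using u by simp
    then show False using y(2) nx frontier_subset_closed[of \<sigma>] compact_imp_closed[OF assms(1)] by auto
  qed
qed

lemma ray_bound:
  fixes \<sigma> :: "(real^'n) set"
  assumes "compact \<sigma>" "c \<in> \<sigma>" "p \<in> \<sigma>" "p \<noteq> c"
  shows "dinf c p \<le> (SUP y\<in>frontier \<sigma>. dinf c y)"
proof -
  obtain B where B: "\<And>x. x \<in> \<sigma> \<Longrightarrow> norm x \<le> B"
    using compact_imp_bounded[OF assms(1)] bounded_iff by blast
  let ?R = "(\<lambda>t. c + t *\<^sub>R (p - c)) ` {1..}"
  have con: "connected ?R"
    by (rule connected_continuous_image) (auto intro!: continuous_intros simp: connected_Ici)
  have np: "norm (p - c) > 0" using assms by simp
  define t where "t = (B + norm c + 1) / norm (p - c) + 1"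
  have t1: "t \<ge> 1"
  proof -
    have "B \<ge> 0" using B[OF assms(2)] norm_ge_zero[of c] by linarith
    then have "(B + norm c + 1) / norm (p - c) \<ge> 0" using np by (intro divide_nonneg_pos) auto
    then show ?thesis unfolding t_def by linarith
  qed
  have "t * norm (p - c) = B + norm c + 1 + norm (p - c)" unfolding t_def using np
    by (simp add: field_simps)
  moreover have "norm (c + t *\<^sub>R (p - c)) \<ge> t * norm (p - c) - norm c"
    using norm_triangle_ineq2[of "t *\<^sub>R (p - c)" "- c"] t1 by (simp add: add.commute)
  ultimately have "norm (c + t *\<^sub>R (p - c)) > B" using np by linarith
  then have "c + t *\<^sub>R (p - c) \<notin> \<sigma>" using B by force
  then have "?R - \<sigma> \<noteq> {}" using t1 by auto
  moreover have "?R \<inter> \<sigma> \<noteq> {}" using assms(3) by (auto intro!: image_eqI[where x=1])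
  ultimately have "?R \<inter> frontier \<sigma> \<noteq> {}" using connected_Int_frontier[OF con] by blast
  then obtain s where s: "s \<ge> 1" "c + s *\<^sub>R (p - c) \<in> frontier \<sigma>" by auto
  let ?y = "c + s *\<^sub>R (p - c)"
  obtain i where i: "dinf c p = \<bar>c$i - p$i\<bar>" using dinf_attained by blast
  have "\<bar>c$i - ?y$i\<bar> = s * \<bar>c$i - p$i\<bar>" using s(1) by (simp add: abs_mult abs_minus_commute)
  also have "\<dots> \<ge> \<bar>c$i - p$i\<bar>" using s(1) mult_right_mono[of 1 s "\<bar>c$i - p$i\<bar>"] by simp
  finally have "dinf c p \<le> dinf c ?y" using i dinf_ge[of c i ?y] by linarith
  also have "dinf c ?y \<le> (SUP y\<in>frontier \<sigma>. dinf c y)"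
  proof (rule cSUP_upper[OF s(2)])
    have "\<And>y. y \<in> frontier \<sigma> \<Longrightarrow> dinf c y \<le> norm c + B"
    proof -
      fix y assume "y \<in> frontier \<sigma>"
      then have "y \<in> \<sigma>" using frontier_subset_closed compact_imp_closed[OF assms(1)] by blast
      then have "norm y \<le> B" using B by blast
      then show "dinf c y \<le> norm c + B" using dinf_le_norm[of c y] norm_triangle_ineq4[of c y] by linarith
    qed
    then show "bdd_above ((\<lambda>y. dinf c y) ` frontier \<sigma>)" by (rule bdd_aboveI2)
  qed
  finally show ?thesis .
qed


lemma anc_point_facts:
  assumes w1: "1 \<le> width cen \<sigma>"
    and i_def: "i = \<lfloor>log 2 (width cen \<sigma>)\<rfloor>" and s_def: "s = (2::real) powr (real_of_int i + 1)"
  shows "0 \<le> i" "2 powr real_of_int i \<le> width cen \<sigma>" "width cen \<sigma> < s"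
    "\<forall>j. \<exists>k::int. anc_point cen \<sigma> $ j = s * k \<and> \<bar>anc_point cen \<sigma> $ j - cen \<sigma> $ j\<bar> \<le> 2 powr real_of_int i"
proof -
  let ?w = "width cen \<sigma>"
  have wpos: "?w > 0" using w1 by simp
  have "log 2 ?w \<ge> 0" using w1 by simp
  then show "0 \<le> i" unfolding i_def by simp
  have "real_of_int i \<le> log 2 ?w" unfolding i_def by simp
  then show "2 powr real_of_int i \<le> ?w" using le_log_iff[of 2 ?w] wpos by simp
  have "log 2 ?w < real_of_int i + 1" unfolding i_def by linarith
  then show "?w < s" unfolding s_def using log_less_iff[of 2 ?w] wpos by simp
  let ?h = "(2::real) powr real_of_int i"
  have sh: "s = 2 * ?h" unfolding s_def by (simp add: powr_add)
  have hpos: "?h > 0" by simp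
  show "\<forall>j. \<exists>k::int. anc_point cen \<sigma> $ j = s * k \<and> \<bar>anc_point cen \<sigma> $ j - cen \<sigma> $ j\<bar> \<le> ?h"
  proof
    fix j
    let ?c = "cen \<sigma> $ j"
    let ?q = "\<lfloor>?c / s\<rfloor>"
    have spos: "s > 0" using sh hpos by simp
    have ap: "anc_point cen \<sigma> $ j = (if ?c - s * ?q < ?h then s * ?q else s * ?q + s)"
      unfolding anc_point_def Let_def i_def s_def by simp
    have g1: "real_of_int ?q \<le> ?c / s" by linarith
    have g2: "?c / s < real_of_int ?q + 1" by linarith
    have f1: "s * ?q \<le> ?c"
      using mult_left_mono[OF g1, of s] spos by simp
    have f2: "?c < s * ?q + s"
      using mult_strict_left_mono[OF g2 spos] spos by (simp add: algebra_simps)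
    show "\<exists>k::int. anc_point cen \<sigma> $ j = s * k \<and> \<bar>anc_point cen \<sigma> $ j - ?c\<bar> \<le> ?h"
    proof (cases "?c - s * ?q < ?h")
      case True
      then show ?thesis using ap f1 by (intro exI[of _ ?q]) auto
    next
      case False
      then show ?thesis using ap f2 sh by (intro exI[of _ "?q + 1"]) (auto simp: algebra_simps)
    qed
  qed
qed


lemma anc_fold_subset: "foldl (anc_step cen) S xs \<subseteq> S \<union> anc_point cen ` set xs"
proof (induction xs arbitrary: S)
  case Nil then show ?case by simp
next
  case (Cons x xs)
  have "foldl (anc_step cen) S (x # xs) = foldl (anc_step cen) (anc_step cen S x) xs" by simp
  also have "\<dots> \<subseteq> anc_step cen S x \<union> anc_point cen ` set xs" by (rule Cons.IH)
  also have "\<dots> \<subseteq> S \<union> anc_point cen ` set (x # xs)" unfolding anc_step_def by auto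
  finally show ?case .
qed

lemma anc_subset: "anc cen \<sigma>s \<subseteq> anc_point cen ` set \<sigma>s"
  unfolding anc_def using anc_fold_subset[of cen "{}" \<sigma>s] by simp

lemma anc_point_in:
  assumes "valid_center cen" "is_object \<sigma>" "1 \<le> width cen \<sigma>"
  shows "anc_point cen \<sigma> \<in> \<sigma>" "anc_point cen \<sigma> \<in> Zd"
proof -
  define i where "i = \<lfloor>log 2 (width cen \<sigma>)\<rfloor>"
  define s where "s = (2::real) powr (real_of_int i + 1)"
  note F = anc_point_facts[OF assms(3) i_def s_def]
  have c: "cen \<sigma> \<in> \<sigma>" using assms(1,2) unfolding valid_center_def by blast
  have cp: "compact \<sigma>" using assms(2) unfolding is_object_def by blast
  have "dinf (cen \<sigma>) (anc_point cen \<sigma>) \<le> (INF y\<in>frontier \<sigma>. dinf (cen \<sigma>) y)"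
    unfolding width_def[symmetric] dinf_le_iff
  proof
    fix j
    obtain k where "\<bar>anc_point cen \<sigma> $ j - cen \<sigma> $ j\<bar> \<le> 2 powr real_of_int i" using F(4) by blast
    then show "\<bar>cen \<sigma> $ j - anc_point cen \<sigma> $ j\<bar> \<le> width cen \<sigma>" using F(2) abs_minus_commute[of "cen \<sigma> $ j" "anc_point cen \<sigma> $ j"] by linarith
  qed
  then show "anc_point cen \<sigma> \<in> \<sigma>" using inner_box[OF cp c, of "anc_point cen \<sigma>"] by simp
  have sZ: "s \<in> \<int>"
  proof -
    have "real_of_int i + 1 = real (nat (i + 1))" using F(1) by simp
    then have "s = 2 powr (real (nat (i + 1)))" by (simp only: s_def)
    also have "\<dots> = 2 ^ nat (i + 1)" by (rule powr_realpow) simp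
    finally have "s = 2 ^ nat (i + 1)" .
    then show ?thesis by simp
  qed
  show "anc_point cen \<sigma> \<in> Zd" unfolding Zd_def
  proof (safe)
    fix j
    obtain k :: int where "anc_point cen \<sigma> $ j = s * k" using F(4) by blast
    then show "anc_point cen \<sigma> $ j \<in> \<int>" using sZ by simp
  qed
qed

theorem theorem3:
  fixes \<alpha> M :: real
    and cen :: "(real^'n) set \<Rightarrow> real^'n"
    and \<sigma>s :: "(real^'n) set list"
  assumes "0 < \<alpha>" and "\<alpha> \<le> 1" and "M > 1"
    and "valid_center cen"
    and "\<forall>\<sigma>\<in>set \<sigma>s. is_object \<sigma> \<and> fat \<alpha> \<sigma> \<and> 1 \<le> width cen \<sigma> \<and> width cen \<sigma> \<le> M"
  shows "real (card (anc cen \<sigma>s))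
           \<le> real_of_int (\<lfloor>2 / \<alpha> + 2\<rfloor> ^ CARD('n) * (\<lfloor>log 2 M\<rfloor> + 1)) * real (opt \<sigma>s)"
proof -
  define K where "K = \<lfloor>2 / \<alpha> + 2\<rfloor>"
  define m where "m = \<lfloor>log 2 M\<rfloor>"
  have apos: "0 < \<alpha>" by fact
  have Kpos: "K \<ge> 0" unfolding K_def using apos by simp
  have m0: "m \<ge> 0" unfolding m_def using assms(3) by simp
  have ex: "\<exists>k. \<exists>H. finite H \<and> H \<subseteq> Zd \<and> hits H \<sigma>s \<and> card H = k"
    apply (rule exI[of _ "card (anc_point cen ` set \<sigma>s)"])
    apply (rule exI[of _ "anc_point cen ` set \<sigma>s"])
    using anc_point_in[OF assms(4)] assms(5) unfolding hits_def by blast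
  obtain H where H: "finite H" "H \<subseteq> Zd" "hits H \<sigma>s" "card H = opt \<sigma>s"
    using LeastI_ex[OF ex] unfolding opt_def[symmetric] by blast
  define sc :: "int \<Rightarrow> real" where "sc i = (2::real) powr (real_of_int i + 1)" for i
  define B where "B p i j = {\<lfloor>p$j / sc i - 1/\<alpha> - 1/2\<rfloor> + 1 .. \<lfloor>p$j / sc i - 1/\<alpha> - 1/2\<rfloor> + K}"
    for p :: "real^'n" and i j
  define A where "A p i = (\<lambda>f. \<chi> j. sc i * real_of_int (f j)) ` PiE UNIV (B p i)" for p i
  have finA: "finite (A p i)" for p i
    unfolding A_def B_def by (intro finite_imageI finite_PiE) auto
  have cardA: "card (A p i) \<le> nat K ^ CARD('n)" for p i
  proof -
    have "card (A p i) \<le> card (PiE (UNIV::'n set) (B p i))" unfolding A_def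
      by (rule card_image_le) (auto simp: B_def intro!: finite_PiE)
    also have "\<dots> = (\<Prod>j\<in>UNIV. card (B p i j))" by (simp add: card_PiE)
    also have "\<dots> = nat K ^ CARD('n)" unfolding B_def by simp
    finally show ?thesis .
  qed
  have key: "anc cen \<sigma>s \<subseteq> (\<Union>p\<in>H. \<Union>i\<in>{0..m}. A p i)"
  proof
    fix r assume "r \<in> anc cen \<sigma>s"
    then obtain \<sigma> where \<sigma>: "\<sigma> \<in> set \<sigma>s" and r: "r = anc_point cen \<sigma>" using anc_subset by blast
    have obj: "is_object \<sigma>" and fat: "fat \<alpha> \<sigma>" and w1: "1 \<le> width cen \<sigma>" and wM: "width cen \<sigma> \<le> M"
      using assms(5) \<sigma> by auto
    obtain p where p: "p \<in> H" "p \<in> \<sigma>" using H(3) \<sigma> unfolding hits_def by blast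
    define c where "c = cen \<sigma>"
    define w where "w = width cen \<sigma>"
    define i where "i = \<lfloor>log 2 w\<rfloor>"
    define s where "s = sc i"
    define h where "h = (2::real) powr real_of_int i"
    note F = anc_point_facts[OF w1 i_def[unfolded w_def] s_def[unfolded sc_def]]
    have sh: "s = 2 * h" unfolding s_def sc_def h_def by (simp add: powr_add)
    have hpos: "h > 0" unfolding h_def by simp
    have c: "c \<in> \<sigma>" "alpha_pt \<sigma> c = alpha_obj \<sigma>"
      using assms(4) obj unfolding valid_center_def c_def by auto
    have cp: "compact \<sigma>" using obj unfolding is_object_def by blast
    have im: "i \<in> {0..m}"
    proof -
      have "log 2 w \<le> log 2 M" using w1 wM unfolding w_def by simp
      then show ?thesis using F(1) unfolding i_def m_def w_def by (simp add: floor_mono)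
    qed
    have cpb: "\<bar>c$j - p$j\<bar> < s / \<alpha>" for j
    proof (cases "p = c")
      case True
      then show ?thesis using sh hpos apos by simp
    next
      case False
      define S where "S = (SUP y\<in>frontier \<sigma>. dinf c y)"
      have d1: "dinf c p \<le> S" unfolding S_def by (rule ray_bound[OF cp c(1) p(2) False])
      have "\<alpha> \<le> w / S" using fat c(2) unfolding fat_def alpha_pt_def w_def width_def S_def c_def
        by simp
      moreover have wpos: "w > 0" using w1 unfolding w_def by simp
      ultimately have Spos: "S > 0" using apos
        by (smt (verit) divide_nonneg_nonpos)
      have "\<alpha> * S \<le> w" using \<open>\<alpha> \<le> w / S\<close> Spos by (simp add: pos_le_divide_eq)
      then have "S \<le> w / \<alpha>" using apos by (simp add: pos_le_divide_eq mult.commute)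
      also have "\<dots> < s / \<alpha>" using F(3) apos unfolding w_def s_def sc_def by (simp add: divide_strict_right_mono)
      finally show ?thesis using d1 dinf_ge[of c j p] by linarith
    qed
    have "\<forall>j. \<exists>k::int. r $ j = s * k \<and> \<bar>r $ j - c $ j\<bar> \<le> h"
      using F(4) unfolding r c_def s_def h_def sc_def by simp
    then obtain k where k: "\<And>j. r $ j = s * real_of_int (k j)" "\<And>j. \<bar>r $ j - c $ j\<bar> \<le> h"
      by metis
    have kB: "k j \<in> B p i j" for j
    proof -
      define a where "a = p$j / s - 1/\<alpha> - 1/2"
      have spos: "s > 0" using sh hpos by simp
      have "\<bar>s * k j - p$j\<bar> < s/2 + s/\<alpha>" using k[of j] cpb[of j] sh by linarith
      have e1: "s * a = p$j - s/\<alpha> - s/2" unfolding a_def using spos by (simp add: field_simps)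
      have e2: "s * (a + 2/\<alpha> + 1) = s * a + 2 * (s/\<alpha>) + s" by (simp add: algebra_simps)
      have lo: "s * a < s * k j" and hi: "s * k j < s * (a + 2/\<alpha> + 1)"
        using e1 e2 \<open>\<bar>s * k j - p$j\<bar> < s/2 + s/\<alpha>\<close> by linarith+
      have lo': "a < k j" using lo spos by simp
      have hi': "k j < a + 2/\<alpha> + 1" using hi spos by simp
      have "\<lfloor>a\<rfloor> + 1 \<le> k j" using lo' by linarith
      moreover have "k j - \<lfloor>a\<rfloor> \<le> K"
      proof -
        have "real_of_int (k j - \<lfloor>a\<rfloor>) \<le> 2/\<alpha> + 2" using hi' by linarith
        then show ?thesis unfolding K_def by (subst le_floor_iff) simp
      qed
      ultimately show ?thesis unfolding B_def a_def s_def by simp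
    qed
    have "r = (\<lambda>f. \<chi> j. sc i * real_of_int (f j)) k"
      using k(1) unfolding s_def by (simp add: vec_eq_iff)
    then have "r \<in> A p i" unfolding A_def using kB by auto
    then show "r \<in> (\<Union>p\<in>H. \<Union>i\<in>{0..m}. A p i)" using p(1) im by blast
  qed
  have "card (anc cen \<sigma>s) \<le> card (\<Union>p\<in>H. \<Union>i\<in>{0..m}. A p i)"
    by (rule card_mono[OF _ key]) (use H(1) finA in auto)
  also have "\<dots> \<le> (\<Sum>p\<in>H. card (\<Union>i\<in>{0..m}. A p i))" by (rule card_UN_le[OF H(1)])
  also have "\<dots> \<le> (\<Sum>p\<in>H. \<Sum>i\<in>{0..m}. card (A p i))"
    by (intro sum_mono card_UN_le) auto
  also have "\<dots> \<le> (\<Sum>p\<in>H. \<Sum>i\<in>{0..m}. nat K ^ CARD('n))"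
    by (intro sum_mono cardA)
  also have "\<dots> = card H * (nat (m + 1) * nat K ^ CARD('n))" using m0 by simp
  finally have "real (card (anc cen \<sigma>s)) \<le> real (card H * (nat (m + 1) * nat K ^ CARD('n)))"
    by linarith
  also have "\<dots> = real_of_int (K ^ CARD('n) * (m + 1)) * real (opt \<sigma>s)"
    using H(4) m0 Kpos by simp
  finally show ?thesis unfolding K_def m_def .
qed

end
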